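(* Let $G$ be a locally compact groupoid. Then $G$ acts properly on itself (by right multiplication) if and only if $G^{(0)}$ is Hausdorff. In particular, a locally compact space, viewed as a groupoid consisting only of units, is proper if and only if it is Hausdorff.
   Context: Locally compact: every point has a compact (quasi-compact Hausdorff) neighbourhood; the space need not be Hausdorff. A continuous map is proper if closed with quasi-compact fibres; a groupoid $H$ is proper if $(r,s)\colon H\to H^{(0)}\times H^{(0)}$ is proper. The right action of $G$ on itself has momentum map $s$ and is $(h,g)\mapsto hg$; it is proper if the groupoid $G\rtimes G=\{(h,g):s(h)=r(g)\}$ (units $G$, range $(h,g)\mapsto h$, source $(h,g)\mapsto hg$) is proper. *)

theory Defs
  imports "HOL-Analysis.Analysis"
begin

text \<open>Locally compact in the sense of the paper: every point has a compact neighbourhood,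
  where "compact" means quasi-compact and Hausdorff (the space itself need not be Hausdorff).\<close>
definition lc_space :: "'a topology \<Rightarrow> bool" where
  "lc_space X \<longleftrightarrow> (\<forall>x \<in> topspace X. \<exists>U K. openin X U \<and> x \<in> U \<and> U \<subseteq> K \<and>
       compactin X K \<and> Hausdorff_space (subtopology X K))"

definition groupoid ::
  "'a set \<Rightarrow> 'a set \<Rightarrow> ('a \<Rightarrow> 'a) \<Rightarrow> ('a \<Rightarrow> 'a) \<Rightarrow> ('a \<Rightarrow> 'a \<Rightarrow> 'a) \<Rightarrow> ('a \<Rightarrow> 'a) \<Rightarrow> bool" where
  "groupoid Gs G0 r s m i \<longleftrightarrow>
     G0 \<subseteq> Gs \<and>
     (\<forall>g\<in>Gs. r g \<in> G0 \<and> s g \<in> G0) \<and>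
     (\<forall>u\<in>G0. r u = u \<and> s u = u) \<and>
     (\<forall>g\<in>Gs. \<forall>h\<in>Gs. s g = r h \<longrightarrow> m g h \<in> Gs \<and> r (m g h) = r g \<and> s (m g h) = s h) \<and>
     (\<forall>g\<in>Gs. \<forall>h\<in>Gs. \<forall>k\<in>Gs. s g = r h \<longrightarrow> s h = r k \<longrightarrow> m (m g h) k = m g (m h k)) \<and>
     (\<forall>g\<in>Gs. m (r g) g = g \<and> m g (s g) = g) \<and>
     (\<forall>g\<in>Gs. i g \<in> Gs \<and> r (i g) = s g \<and> s (i g) = r g \<and> m g (i g) = r g \<and> m (i g) g = s g)"

definition composable :: "'a set \<Rightarrow> ('a \<Rightarrow> 'a) \<Rightarrow> ('a \<Rightarrow> 'a) \<Rightarrow> ('a \<times> 'a) set" where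
  "composable Gs r s = {(g, h). g \<in> Gs \<and> h \<in> Gs \<and> s g = r h}"

text \<open>Topological groupoid (not necessarily Hausdorff); the topology T has carrier Gs,
  and G0 carries the subspace topology.\<close>
definition top_groupoid ::
  "'a topology \<Rightarrow> 'a set \<Rightarrow> ('a \<Rightarrow> 'a) \<Rightarrow> ('a \<Rightarrow> 'a) \<Rightarrow> ('a \<Rightarrow> 'a \<Rightarrow> 'a) \<Rightarrow> ('a \<Rightarrow> 'a) \<Rightarrow> bool" where
  "top_groupoid T G0 r s m i \<longleftrightarrow>
     groupoid (topspace T) G0 r s m i \<and>
     continuous_map T (subtopology T G0) r \<and>
     continuous_map T (subtopology T G0) s \<and>
     continuous_map (subtopology (prod_topology T T) (composable (topspace T) r s)) T
        (\<lambda>(g, h). m g h) \<and>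
     continuous_map T T i"

definition proper_groupoid ::
  "'h topology \<Rightarrow> 'u topology \<Rightarrow> ('h \<Rightarrow> 'u) \<Rightarrow> ('h \<Rightarrow> 'u) \<Rightarrow> bool" where
  "proper_groupoid H U r s \<longleftrightarrow> proper_map H (prod_topology U U) (\<lambda>x. (r x, s x))"

text \<open>The right action of G on itself is proper iff the groupoid G \<rtimes> G =
  {(h,g). s h = r g} (units G, range (h,g) \<mapsto> h, source (h,g) \<mapsto> hg) is proper.\<close>
definition right_action_proper ::
  "'a topology \<Rightarrow> ('a \<Rightarrow> 'a) \<Rightarrow> ('a \<Rightarrow> 'a) \<Rightarrow> ('a \<Rightarrow> 'a \<Rightarrow> 'a) \<Rightarrow> bool" where
  "right_action_proper T r s m \<longleftrightarrow>
     proper_groupoid (subtopology (prod_topology T T) (composable (topspace T) r s)) T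
       (\<lambda>(h, g). h) (\<lambda>(h, g). m h g)"

end

theory Submission
  imports Defs
begin

lemma part1:
  fixes T :: "'a topology"
  assumes tg: "top_groupoid T G0 r s m i"
  shows "right_action_proper T r s m \<longleftrightarrow> Hausdorff_space (subtopology T G0)"
proof -
  define D where "D = composable (topspace T) r s"
  define E where "E = {p \<in> topspace (prod_topology T T). r (fst p) = r (snd p)}"
  define f where "f = (\<lambda>(h, g). (h, m h g))"
  define psi where "psi = (\<lambda>(a, b). (a, m (i a) b))"
  have gr: "groupoid (topspace T) G0 r s m i" and cr: "continuous_map T (subtopology T G0) r"
    and cm: "continuous_map (subtopology (prod_topology T T) D) T (\<lambda>(g, h). m g h)"
    and ci: "continuous_map T T i"
    using tg unfolding top_groupoid_def D_def by auto
  note g = gr[unfolded groupoid_def]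
  have assoc: "\<And>a b c. a \<in> topspace T \<Longrightarrow> b \<in> topspace T \<Longrightarrow> c \<in> topspace T \<Longrightarrow>
      s a = r b \<Longrightarrow> s b = r c \<Longrightarrow> m (m a b) c = m a (m b c)"
    using g by blast
  have lunit: "\<And>a. a \<in> topspace T \<Longrightarrow> m (r a) a = a" using g by blast
  have inv: "\<And>a. a \<in> topspace T \<Longrightarrow> i a \<in> topspace T \<and> r (i a) = s a \<and> s (i a) = r a \<and> m a (i a) = r a \<and> m (i a) a = s a"
    using g by blast
  have G0sub: "G0 \<subseteq> topspace T" using g by blast
  have tD: "topspace (subtopology (prod_topology T T) D) = D"
    unfolding D_def composable_def by auto
  have tE: "topspace (subtopology (prod_topology T T) E) = E"
    unfolding E_def by auto
  have fD: "f ` D = E"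
  proof
    show "f ` D \<subseteq> E" using g unfolding f_def D_def E_def composable_def by auto
    show "E \<subseteq> f ` D"
    proof
      fix p assume p: "p \<in> E"
      obtain a b where ab: "p = (a, b)" by force
      have a: "a \<in> topspace T" and b: "b \<in> topspace T" and rab: "r a = r b"
        using p ab unfolding E_def by auto
      have ia: "i a \<in> topspace T" "r (i a) = s a" "s (i a) = r a" "m a (i a) = r a"
        using g a by auto
      have mib: "m (i a) b \<in> topspace T" "r (m (i a) b) = r (i a)"
        using g ia b rab by auto
      have "(a, m (i a) b) \<in> D" unfolding D_def composable_def using a mib ia by auto
      moreover have "m a (m (i a) b) = b"
      proof -
        have "m a (m (i a) b) = m (m a (i a)) b"
          using assoc[of a "i a" b] a ia b rab by simp
        also have "\<dots> = b" using ia rab lunit b by simp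
        finally show ?thesis .
      qed
      ultimately show "p \<in> f ` D" unfolding f_def ab by force
    qed
  qed
  have cf: "continuous_map (subtopology (prod_topology T T) D) (prod_topology T T) f"
    unfolding f_def
    apply (simp add: case_prod_unfold continuous_map_pairwise o_def)
    using cm by (auto simp: case_prod_unfold intro: continuous_map_from_subtopology continuous_map_fst)
  have cpre: "continuous_map (subtopology (prod_topology T T) E) (subtopology (prod_topology T T) D)
       (\<lambda>p. (i (fst p), snd p))"
  proof (rule continuous_map_into_subtopology)
    show "continuous_map (subtopology (prod_topology T T) E) (prod_topology T T) (\<lambda>p. (i (fst p), snd p))"
      apply (simp add: continuous_map_pairwise o_def)
      apply (intro conjI continuous_map_from_subtopology)
      using continuous_map_compose[OF continuous_map_fst[of T T] ci] by (simp add: o_def) (metis continuous_map_snd)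
    show "(\<lambda>p. (i (fst p), snd p)) \<in> topspace (subtopology (prod_topology T T) E) \<rightarrow> D"
      unfolding tE E_def D_def composable_def using g by auto
  qed
  have cpsi: "continuous_map (subtopology (prod_topology T T) E) (subtopology (prod_topology T T) D) psi"
  proof (rule continuous_map_into_subtopology)
    have c2: "continuous_map (subtopology (prod_topology T T) E) T (\<lambda>p. m (i (fst p)) (snd p))"
      using continuous_map_compose[OF cpre cm] by (simp add: o_def)
    show "continuous_map (subtopology (prod_topology T T) E) (prod_topology T T) psi"
      unfolding psi_def
      apply (simp add: case_prod_unfold continuous_map_pairwise o_def)
      using c2 by (auto intro: continuous_map_from_subtopology continuous_map_fst)
    show "psi \<in> topspace (subtopology (prod_topology T T) E) \<rightarrow> D"
    proof
      fix q assume "q \<in> topspace (subtopology (prod_topology T T) E)"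
      then obtain a b where ab: "(a,b) \<in> E" "q = (a, b)" unfolding tE by (cases q) auto
      then show "psi q \<in> D" unfolding psi_def E_def D_def composable_def using g by auto
    qed
  qed
  have hm: "homeomorphic_maps (subtopology (prod_topology T T) D) (subtopology (prod_topology T T) E) f psi"
    unfolding homeomorphic_maps_def
  proof (intro conjI)
    show "continuous_map (subtopology (prod_topology T T) D) (subtopology (prod_topology T T) E) f"
      using cf fD tD by (auto intro: continuous_map_into_subtopology)
    show "continuous_map (subtopology (prod_topology T T) E) (subtopology (prod_topology T T) D) psi"
      by (rule cpsi)
    show "\<forall>x\<in>topspace (subtopology (prod_topology T T) D). psi (f x) = x"
    proof
      fix x assume "x \<in> topspace (subtopology (prod_topology T T) D)"
      then obtain h k where x: "x = (h,k)" "h \<in> topspace T" "k \<in> topspace T" "s h = r k"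
        unfolding tD D_def composable_def by auto
      have "m (i h) (m h k) = m (m (i h) h) k"
        using assoc[of "i h" h k] inv[of h] x by simp
      also have "\<dots> = m (s h) k" using inv[of h] x by simp
      also have "\<dots> = k" using lunit[of k] x by simp
      finally show "psi (f x) = x" unfolding psi_def f_def x by simp
    qed
    show "\<forall>y\<in>topspace (subtopology (prod_topology T T) E). f (psi y) = y"
    proof
      fix y assume "y \<in> topspace (subtopology (prod_topology T T) E)"
      then obtain a b where y: "y = (a,b)" "a \<in> topspace T" "b \<in> topspace T" "r a = r b"
        unfolding tE E_def by auto
      have ia: "i a \<in> topspace T" "r (i a) = s a" "s (i a) = r a" "m a (i a) = r a"
        using g y by auto
      have "m a (m (i a) b) = m (m a (i a)) b"
        using assoc[of a "i a" b] y ia by simp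
      also have "\<dots> = b" using ia y lunit by simp
      finally show "f (psi y) = y" unfolding psi_def f_def y by simp
    qed
  qed
  have emb: "embedding_map (subtopology (prod_topology T T) D) (prod_topology T T) f"
    unfolding embedding_map_def tD fD homeomorphic_map_maps using hm by blast
  have inj: "inj_on f (topspace (subtopology (prod_topology T T) D))"
    using hm by (metis homeomorphic_maps_imp_map homeomorphic_map_def)
  have fe: "(\<lambda>x. ((\<lambda>(h, g). h) x, (\<lambda>(h, g). m h g) x)) = f"
    unfolding f_def by (auto simp: fun_eq_iff)
  have "right_action_proper T r s m \<longleftrightarrow> closedin (prod_topology T T) E"
    unfolding right_action_proper_def proper_groupoid_def D_def[symmetric] fe
    using injective_imp_proper_eq_closed_map[OF inj] embedding_imp_closed_map_eq[OF emb, unfolded tD fD]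
    by simp
  also have "\<dots> \<longleftrightarrow> Hausdorff_space (subtopology T G0)"
  proof
    assume H: "Hausdorff_space (subtopology T G0)"
    have "closedin (prod_topology T T) {p \<in> topspace (prod_topology T T). (r o fst) p = (r o snd) p}"
      by (rule closedin_continuous_maps_eq[OF H continuous_map_compose[OF continuous_map_fst[of T T] cr]
              continuous_map_compose[OF continuous_map_snd[of T T] cr]])
    then show "closedin (prod_topology T T) E" unfolding E_def by simp
  next
    assume C: "closedin (prod_topology T T) E"
    have tG: "topspace (subtopology T G0) = G0" using G0sub by auto
    have "(\<lambda>x. (x, x)) ` G0 = E \<inter> (G0 \<times> G0)"
      unfolding E_def using g G0sub by auto
    then have "closedin (subtopology (prod_topology T T) (G0 \<times> G0)) ((\<lambda>x. (x, x)) ` G0)"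
      using C closedin_subtopology by blast
    then show "Hausdorff_space (subtopology T G0)"
      unfolding Hausdorff_space_closedin_diagonal tG subtopology_Times .
  qed
  finally show ?thesis .
qed

theorem proposition2p16:
  shows "(\<forall>(T :: 'a topology) G0 r s m i. top_groupoid T G0 r s m i \<and> lc_space T \<longrightarrow>
            (right_action_proper T r s m \<longleftrightarrow> Hausdorff_space (subtopology T G0)))
       \<and> (\<forall>X :: 'b topology. lc_space X \<longrightarrow>
            (proper_groupoid X X (\<lambda>x. x) (\<lambda>x. x) \<longleftrightarrow> Hausdorff_space X))"
proof (intro conjI allI impI)
  fix T :: "'a topology" and G0 r s m i
  assume "top_groupoid T G0 r s m i \<and> lc_space T"
  then show "right_action_proper T r s m \<longleftrightarrow> Hausdorff_space (subtopology T G0)"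
    using part1 by blast
next
  fix X :: "'b topology"
  show "proper_groupoid X X (\<lambda>x. x) (\<lambda>x. x) \<longleftrightarrow> Hausdorff_space X"
    by (simp add: proper_groupoid_def)
qed

end
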